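(* Consider the algorithm SR-DFF run with input $m$ on a stream consistent with some representation of size $m$ with at most $k$ exceptions. Then SR-DFF creates at most $m+k$ rules during the entire run.
   Context: Setting. $\mathcal{X}$ is a domain, $\mathcal{Y}$ a finite label set, $\Phi$ a set of binary features on $\mathcal{X}$ closed under negation. A representation of size $m$ is a cover $\mathcal{G}=\{G_1,\dots,G_m\}$ of $\mathcal{X}$ by components with labels $\ell(G)$; each $x$ has a fixed component $G(x)\ni x$; $c^*(x)=\ell(G(x))$; for components $G_i,G_j$ with different labels there is $\phi(G_i,G_j)\in\Phi$ true on all of $G_i$ and false on all of $G_j$, with $\phi(G_j,G_i)=\neg\phi(G_i,G_j)$. Protocol: the learner first gets $x_0$ with label $y_0$; then each example $x_t$ arrives, the learner predicts a label with an explanation example previously seen with that label; on a mistake the teacher gives $y_t=c^*(x_t)$ and $\phi(G(x_t),G(\hat x_t))$, $\hat x_t$ the explanation. An exception is an example on which the feedback is inconsistent with the representation/protocol; a stream is consistent with the representation with at most $k$ exceptions if at most $k$ examples are exceptions. SR-DFF (input $m$): receives $(x_0,y_0)$; maintains a list $L$ of rules, each indexed by a representative example $x$, with a conjunction $C[x]$ of features and a label $\texttt{label}[x]$. On $x_t$: if some $C[\hat x]\in L$ is satisfied by $x_t$, predict $\texttt{label}[\hat x]$ with explanation $\hat x$; if incorrect, receive $y_t,\phi$, set $C[\hat x]:=C[\hat x]\wedge\neg\phi$, and delete the rule if $C[\hat x]$ has at least $m$ features. Otherwise predict $y_0$ with explanation $x_0$; if incorrect, receive $y_t,\phi$ and add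 (create) a new rule with empty conjunction $C[x_t]$ and $\texttt{label}[x_t]=y_t$. *)

theory Defs
  imports Main
begin

(* A representation of size m: components G 0 .. G (m-1) (indexed by i < m),
   labels lab i, fixed component assignment gx, separating features phi. *)
definition is_representation ::
  "'x set \<Rightarrow> ('x \<Rightarrow> bool) set \<Rightarrow> 'y set \<Rightarrow> nat \<Rightarrow> (nat \<Rightarrow> 'x set) \<Rightarrow> (nat \<Rightarrow> 'y)
   \<Rightarrow> ('x \<Rightarrow> nat) \<Rightarrow> (nat \<Rightarrow> nat \<Rightarrow> ('x \<Rightarrow> bool)) \<Rightarrow> bool" where
  "is_representation X Phi Y m G lab gx phi \<longleftrightarrow>
     finite Y \<and>
     (\<forall>f\<in>Phi. (\<lambda>x. \<not> f x) \<in> Phi) \<and>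
     (\<forall>i<m. G i \<subseteq> X \<and> lab i \<in> Y) \<and>
     (\<forall>x\<in>X. gx x < m \<and> x \<in> G (gx x)) \<and>
     (\<forall>i<m. \<forall>j<m. lab i \<noteq> lab j \<longrightarrow>
        phi i j \<in> Phi \<and> (\<forall>x\<in>G i. phi i j x) \<and> (\<forall>x\<in>G j. \<not> phi i j x) \<and>
        phi j i = (\<lambda>x. \<not> phi i j x))"

definition cstar :: "(nat \<Rightarrow> 'y) \<Rightarrow> ('x \<Rightarrow> nat) \<Rightarrow> 'x \<Rightarrow> 'y" where
  "cstar lab gx x = lab (gx x)"

(* rule list: representative example \<mapsto> (conjunction as a set of features, label) *)
type_synonym ('x, 'y) rules = "'x \<Rightarrow> (('x \<Rightarrow> bool) set \<times> 'y) option"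

definition rule_sat :: "('x, 'y) rules \<Rightarrow> 'x \<Rightarrow> bool" where
  "rule_sat L x \<longleftrightarrow> (\<exists>e C y. L e = Some (C, y) \<and> (\<forall>f\<in>C. f x))"

(* One step of SR-DFF (input m, initial example x0 with label y0):
   srdff_step m x0 y0 L x e yhat r L' : in state L, on example x, the learner
   predicts yhat with explanation e, receives teacher response r
   (None = no mistake signalled, Some (y, phi) = mistake with correct label y and feature phi),
   and moves to state L'. The choice among satisfied rules is arbitrary. *)
inductive srdff_step ::
  "nat \<Rightarrow> 'x \<Rightarrow> 'y \<Rightarrow> ('x, 'y) rules \<Rightarrow> 'x \<Rightarrow> 'x \<Rightarrow> 'y \<Rightarrow> ('y \<times> ('x \<Rightarrow> bool)) option
   \<Rightarrow> ('x, 'y) rules \<Rightarrow> bool"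
  for m :: nat and x0 :: 'x and y0 :: 'y where
  rule_correct:
    "L e = Some (C, yl) \<Longrightarrow> \<forall>f\<in>C. f x \<Longrightarrow> srdff_step m x0 y0 L x e yl None L"
| rule_mistake:
    "L e = Some (C, yl) \<Longrightarrow> \<forall>f\<in>C. f x \<Longrightarrow>
     srdff_step m x0 y0 L x e yl (Some (y, phi))
       (if m \<le> card (insert (\<lambda>z. \<not> phi z) C) then L(e := None)
        else L(e \<mapsto> (insert (\<lambda>z. \<not> phi z) C, yl)))"
| default_correct:
    "\<not> rule_sat L x \<Longrightarrow> srdff_step m x0 y0 L x x0 y0 None L"
| default_mistake:
    "\<not> rule_sat L x \<Longrightarrow> srdff_step m x0 y0 L x x0 y0 (Some (y, phi)) (L(x \<mapsto> ({}, y)))"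

(* A run on the stream xs (xs 0 = initial example x0, labelled y0); Ls t is the
   rule list before example t (t \<ge> 1); ex t, yhat t = explanation/prediction at t;
   resp t = teacher feedback at t. *)
definition srdff_run ::
  "nat \<Rightarrow> (nat \<Rightarrow> 'x) \<Rightarrow> 'y \<Rightarrow> (nat \<Rightarrow> 'x) \<Rightarrow> (nat \<Rightarrow> 'y)
   \<Rightarrow> (nat \<Rightarrow> ('y \<times> ('x \<Rightarrow> bool)) option) \<Rightarrow> (nat \<Rightarrow> ('x, 'y) rules) \<Rightarrow> bool" where
  "srdff_run m xs y0 ex yhat resp Ls \<longleftrightarrow>
     Ls (Suc 0) = Map.empty \<and>
     (\<forall>t\<ge>1. srdff_step m (xs 0) y0 (Ls t) (xs t) (ex t) (yhat t) (resp t) (Ls (Suc t)))"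

definition exceptions ::
  "(nat \<Rightarrow> 'y) \<Rightarrow> ('x \<Rightarrow> nat) \<Rightarrow> (nat \<Rightarrow> nat \<Rightarrow> ('x \<Rightarrow> bool)) \<Rightarrow> (nat \<Rightarrow> 'x) \<Rightarrow> 'y
   \<Rightarrow> (nat \<Rightarrow> 'x) \<Rightarrow> (nat \<Rightarrow> 'y) \<Rightarrow> (nat \<Rightarrow> ('y \<times> ('x \<Rightarrow> bool)) option) \<Rightarrow> nat set" where
  "exceptions lab gx phi xs y0 ex yhat resp =
     {t. t = 0 \<and> y0 \<noteq> cstar lab gx (xs 0)} \<union>
     {t. t \<ge> 1 \<and> resp t \<noteq>
          (if yhat t = cstar lab gx (xs t) then None
           else Some (cstar lab gx (xs t), phi (gx (xs t)) (gx (ex t))))}"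

definition creation_times ::
  "(nat \<Rightarrow> ('x, 'y) rules) \<Rightarrow> (nat \<Rightarrow> 'x) \<Rightarrow> (nat \<Rightarrow> ('y \<times> ('x \<Rightarrow> bool)) option) \<Rightarrow> nat set" where
  "creation_times Ls xs resp = {t. t \<ge> 1 \<and> \<not> rule_sat (Ls t) (xs t) \<and> resp t \<noteq> None}"

end

theory Submission
  imports Defs
begin

definition goodr :: "nat \<Rightarrow> (nat \<Rightarrow> 'y) \<Rightarrow> ('x \<Rightarrow> nat) \<Rightarrow> (nat \<Rightarrow> nat \<Rightarrow> ('x \<Rightarrow> bool))
   \<Rightarrow> ('x, 'y) rules \<Rightarrow> 'x \<Rightarrow> bool" where
  "goodr m lab gx phi L e \<longleftrightarrow> gx e < m \<and>
     (\<exists>C. L e = Some (C, lab (gx e)) \<and> C \<subseteq> {phi (gx e) j | j. j < m \<and> lab j \<noteq> lab (gx e)})"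

definition comps :: "nat \<Rightarrow> (nat \<Rightarrow> 'y) \<Rightarrow> ('x \<Rightarrow> nat) \<Rightarrow> (nat \<Rightarrow> nat \<Rightarrow> ('x \<Rightarrow> bool))
   \<Rightarrow> ('x, 'y) rules \<Rightarrow> nat set" where
  "comps m lab gx phi L = gx ` {e. goodr m lab gx phi L e}"

lemma comps_sub: "comps m lab gx phi L \<subseteq> {..<m}"
  unfolding comps_def goodr_def by auto

lemma comps_card: "card (comps m lab gx phi L) \<le> m"
  using card_mono[OF _ comps_sub] by fastforce

lemma comps_fin: "finite (comps m lab gx phi L)"
  using finite_subset[OF comps_sub] by blast

lemma rep_gx:
  assumes "is_representation X Phi Y m G lab gx phi" "x \<in> X"
  shows "gx x < m \<and> x \<in> G (gx x)"
  using assms unfolding is_representation_def by blast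

lemma rep_phi:
  assumes "is_representation X Phi Y m G lab gx phi" "i < m" "j < m" "lab i \<noteq> lab j"
  shows "(\<forall>x\<in>G i. phi i j x) \<and> phi j i = (\<lambda>x. \<not> phi i j x)"
  using assms unfolding is_representation_def by blast

lemma good_sat:
  assumes rep: "is_representation X Phi Y m G lab gx phi" and x: "x \<in> X"
    and g: "goodr m lab gx phi L e" and eq: "gx x = gx e"
  shows "rule_sat L x"
proof -
  obtain C where C: "L e = Some (C, lab (gx e))"
    "C \<subseteq> {phi (gx e) j | j. j < m \<and> lab j \<noteq> lab (gx e)}" and lt: "gx e < m"
    using g unfolding goodr_def by blast
  have xG: "x \<in> G (gx e)" using rep_gx[OF rep x] eq by simp
  have "\<forall>f\<in>C. f x"
  proof
    fix f assume "f \<in> C"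
    then obtain j where "f = phi (gx e) j" "j < m" "lab j \<noteq> lab (gx e)" using C(2) by blast
    then show "f x" using rep_phi[OF rep lt, of j] xG by auto
  qed
  then show ?thesis unfolding rule_sat_def using C(1) by blast
qed

lemma Fcard:
  assumes "i < m"
  shows "card {phi i j | j. j < m \<and> lab j \<noteq> lab i} < m" (is "card ?F < m")
proof -
  have "?F = phi i ` {j. j < m \<and> lab j \<noteq> lab i}" by blast
  hence "card ?F \<le> card {j. j < m \<and> lab j \<noteq> lab i}" by (simp add: card_image_le)
  also have "\<dots> \<le> card ({..<m} - {i})" by (rule card_mono) auto
  also have "\<dots> < m" using assms by simp
  finally show ?thesis .
qed

lemma Ffin: fixes m :: nat shows "finite {phi i j | j. j < m \<and> lab j \<noteq> lab i}"
proof -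
  have "{phi i j | j. j < m \<and> lab j \<noteq> lab i} = phi i ` {j. j < m \<and> lab j \<noteq> lab i}" by blast
  have "finite {j. j < m \<and> lab j \<noteq> lab i}" by (rule finite_subset[of _ "{..<m}"]) auto
  thus ?thesis using \<open>_ = _\<close> by simp
qed

lemma S1:
  assumes rep: "is_representation X Phi Y m G lab gx phi" and x: "x \<in> X"
    and st: "srdff_step m x0 y0 L x e yh r L'"
  shows "comps m lab gx phi L \<subseteq> insert (gx e) (comps m lab gx phi L')"
  using st
proof cases
  case (rule_mistake C y phi')
  show ?thesis
  proof
    fix i assume "i \<in> comps m lab gx phi L"
    then obtain e' where g: "goodr m lab gx phi L e'" "i = gx e'" unfolding comps_def by blast
    show "i \<in> insert (gx e) (comps m lab gx phi L')"
    proof (cases "e' = e")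
      case True then show ?thesis using g by simp
    next
      case False
      hence "L' e' = L e'" using rule_mistake by auto
      hence "goodr m lab gx phi L' e'" using g unfolding goodr_def by simp
      then show ?thesis using g unfolding comps_def by blast
    qed
  qed
next
  case (default_mistake y phi')
  show ?thesis
  proof
    fix i assume "i \<in> comps m lab gx phi L"
    then obtain e' where g: "goodr m lab gx phi L e'" "i = gx e'" unfolding comps_def by blast
    have "e' \<noteq> x" using good_sat[OF rep x] g default_mistake by blast
    hence "L' e' = L e'" using default_mistake by auto
    hence "goodr m lab gx phi L' e'" using g unfolding goodr_def by simp
    then show "i \<in> insert (gx e) (comps m lab gx phi L')" using g unfolding comps_def by blast
  qed
qed auto

lemma S2:
  assumes rep: "is_representation X Phi Y m G lab gx phi" and x: "x \<in> X"
    and st: "srdff_step m x0 y0 L x e yh r L'" and ns: "\<not> rule_sat L x"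
  shows "comps m lab gx phi L \<subseteq> comps m lab gx phi L'"
  using st
proof cases
  case (rule_correct C)
  then show ?thesis using ns unfolding rule_sat_def by blast
next
  case (rule_mistake C y phi')
  then show ?thesis using ns unfolding rule_sat_def by blast
next
  case (default_mistake y phi')
  show ?thesis
  proof
    fix i assume "i \<in> comps m lab gx phi L"
    then obtain e' where g: "goodr m lab gx phi L e'" "i = gx e'" unfolding comps_def by blast
    have "e' \<noteq> x" using good_sat[OF rep x] g default_mistake by blast
    hence "L' e' = L e'" using default_mistake by auto
    hence "goodr m lab gx phi L' e'" using g unfolding goodr_def by simp
    then show "i \<in> comps m lab gx phi L'" using g unfolding comps_def by blast
  qed
qed auto

lemma S3:
  assumes rep: "is_representation X Phi Y m G lab gx phi" and x: "x \<in> X"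
    and st: "srdff_step m x0 y0 L x e yh r L'"
    and ne: "r = (if yh = cstar lab gx x then None
           else Some (cstar lab gx x, phi (gx x) (gx e)))"
  shows "comps m lab gx phi L \<subseteq> comps m lab gx phi L'
     \<and> (\<not> rule_sat L x \<and> r \<noteq> None \<longrightarrow> gx x \<in> comps m lab gx phi L' - comps m lab gx phi L)"
  using st
proof cases
  case (rule_correct C)
  then show ?thesis unfolding rule_sat_def by blast
next
  case (rule_mistake C y phi')
  have sat: "rule_sat L x" using rule_mistake unfolding rule_sat_def by blast
  have sub: "comps m lab gx phi L \<subseteq> comps m lab gx phi L'"
  proof
    fix i assume "i \<in> comps m lab gx phi L"
    then obtain e' where g: "goodr m lab gx phi L e'" "i = gx e'" unfolding comps_def by blast
    show "i \<in> comps m lab gx phi L'"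
    proof (cases "e' = e")
      case False
      hence "L' e' = L e'" using rule_mistake by auto
      hence "goodr m lab gx phi L' e'" using g unfolding goodr_def by simp
      then show ?thesis using g unfolding comps_def by blast
    next
      case True
      let ?F = "{phi (gx e) j | j. j < m \<and> lab j \<noteq> lab (gx e)}"
      have lt: "gx e < m" and Ce: "C \<subseteq> ?F" and yl: "yh = lab (gx e)"
        using g True rule_mistake unfolding goodr_def by auto
      have neq: "yh \<noteq> cstar lab gx x" and ph: "phi' = phi (gx x) (gx e)"
        using ne rule_mistake by (auto split: if_splits)
      have xl: "gx x < m" using rep_gx[OF rep x] by blast
      have ll: "lab (gx x) \<noteq> lab (gx e)" using neq yl unfolding cstar_def by simp
      have "(\<lambda>z. \<not> phi' z) = phi (gx e) (gx x)"
        using rep_phi[OF rep lt xl] ll ph by auto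
      hence ins: "insert (\<lambda>z. \<not> phi' z) C \<subseteq> ?F" using Ce xl ll by auto
      have "card (insert (\<lambda>z. \<not> phi' z) C) < m"
        using card_mono[OF Ffin[of phi "gx e" m lab] ins] Fcard[OF lt, of phi lab] by linarith
      hence "L' e = Some (insert (\<lambda>z. \<not> phi' z) C, lab (gx e))"
        using rule_mistake yl by simp
      hence "goodr m lab gx phi L' e" using ins lt unfolding goodr_def by blast
      then show ?thesis using g True unfolding comps_def by blast
    qed
  qed
  show ?thesis using sub sat by blast
next
  case default_correct
  then show ?thesis by simp
next
  case (default_mistake y phi')
  have sub: "comps m lab gx phi L \<subseteq> comps m lab gx phi L'"
    using S2[OF rep x st] default_mistake by blast
  have neq: "y0 \<noteq> cstar lab gx x" and yy: "y = cstar lab gx x"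
    using ne default_mistake by (auto split: if_splits)
  have xl: "gx x < m" using rep_gx[OF rep x] by blast
  have "goodr m lab gx phi L' x" using default_mistake yy xl unfolding goodr_def cstar_def by simp
  hence in1: "gx x \<in> comps m lab gx phi L'" unfolding comps_def by blast
  have "gx x \<notin> comps m lab gx phi L"
  proof
    assume "gx x \<in> comps m lab gx phi L"
    then obtain e' where g: "goodr m lab gx phi L e'" "gx x = gx e'" unfolding comps_def by blast
    then show False using good_sat[OF rep x g(1) g(2)] default_mistake by blast
  qed
  then show ?thesis using sub in1 by blast
qed

lemma split_E: "{s\<in>A. 1 \<le> s \<and> s < Suc (Suc n)} =
  (if Suc n \<in> A then insert (Suc n) {s\<in>A. 1 \<le> s \<and> s < Suc n} else {s\<in>A. 1 \<le> s \<and> s < Suc n})"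
  by (auto simp: less_Suc_eq)

lemma split_C: "{s\<in>A. s < Suc (Suc n)} =
  (if Suc n \<in> A then insert (Suc n) {s\<in>A. s < Suc n} else {s\<in>A. s < Suc n})"
  by (auto simp: less_Suc_eq)

lemma fin_from_prefix:
  fixes A :: "nat set"
  assumes "\<And>n. card {s\<in>A. s < n} \<le> B"
  shows "finite A \<and> card A \<le> B"
proof (cases "finite A")
  case True
  show ?thesis
  proof (cases "A = {}")
    case True then show ?thesis by simp
  next
    case False
    have "A = {s\<in>A. s < Suc (Max A)}" using \<open>finite A\<close> by (auto simp: le_imp_less_Suc)
    hence "card A = card {s\<in>A. s < Suc (Max A)}" by (rule arg_cong)
    then show ?thesis using assms[of "Suc (Max A)"] \<open>finite A\<close> by linarith
  qed
next
  case False
  obtain S where S: "S \<subseteq> A" "finite S" "card S = Suc B"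
    using infinite_arbitrarily_large[OF False] by blast
  have ne: "S \<noteq> {}" using S by auto
  have "S \<subseteq> {s\<in>A. s < Suc (Max S)}" using S by (auto simp: le_imp_less_Suc)
  hence "card S \<le> card {s\<in>A. s < Suc (Max S)}" by (rule card_mono[rotated]) simp
  then show ?thesis using assms[of "Suc (Max S)"] S by simp
qed

theorem lemma4:
  fixes X :: "'x set" and Phi :: "('x \<Rightarrow> bool) set" and Y :: "'y set"
    and m k :: nat and G :: "nat \<Rightarrow> 'x set" and lab :: "nat \<Rightarrow> 'y"
    and gx :: "'x \<Rightarrow> nat" and phi :: "nat \<Rightarrow> nat \<Rightarrow> ('x \<Rightarrow> bool)"
    and xs :: "nat \<Rightarrow> 'x" and y0 :: 'y and ex :: "nat \<Rightarrow> 'x" and yhat :: "nat \<Rightarrow> 'y"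
    and resp :: "nat \<Rightarrow> ('y \<times> ('x \<Rightarrow> bool)) option" and Ls :: "nat \<Rightarrow> ('x, 'y) rules"
  assumes "is_representation X Phi Y m G lab gx phi"
    and "\<forall>t. xs t \<in> X"
    and "srdff_run m xs y0 ex yhat resp Ls"
    and "finite (exceptions lab gx phi xs y0 ex yhat resp)"
    and "card (exceptions lab gx phi xs y0 ex yhat resp) \<le> k"
  shows "finite (creation_times Ls xs resp) \<and> card (creation_times Ls xs resp) \<le> m + k"
proof -
  note rep = assms(1)
  let ?E = "exceptions lab gx phi xs y0 ex yhat resp"
  let ?CT = "creation_times Ls xs resp"
  let ?c = "\<lambda>L. comps m lab gx phi L"
  have run1: "Ls (Suc 0) = Map.empty" and
    step: "\<And>t. t \<ge> 1 \<Longrightarrow> srdff_step m (xs 0) y0 (Ls t) (xs t) (ex t) (yhat t) (resp t) (Ls (Suc t))"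
    using assms(3) unfolding srdff_run_def by auto
  have inv: "card {s\<in>?CT. s < Suc n} \<le> card (?c (Ls (Suc n))) + card {s\<in>?E. 1 \<le> s \<and> s < Suc n}" for n
  proof (induction n)
    case 0
    have "{s\<in>?CT. s < Suc 0} = {}" unfolding creation_times_def by auto
    then show ?case by (metis card.empty le0)
  next
    case (Suc n)
    let ?t = "Suc n"
    have st: "srdff_step m (xs 0) y0 (Ls ?t) (xs ?t) (ex ?t) (yhat ?t) (resp ?t) (Ls (Suc ?t))"
      using step by simp
    have x: "xs ?t \<in> X" using assms(2) by blast
    have finE: "finite {s\<in>?E. 1 \<le> s \<and> s < n'}" for n' by simp
    have finC: "finite {s\<in>?CT. s < n'}" for n' by simp
    let ?Ca = "{s\<in>?CT. s < ?t}" and ?Cb = "{s\<in>?CT. s < Suc ?t}"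
    let ?Ea = "{s\<in>?E. 1 \<le> s \<and> s < ?t}" and ?Eb = "{s\<in>?E. 1 \<le> s \<and> s < Suc ?t}"
    have C1: "?Cb = (if ?t \<in> ?CT then insert ?t ?Ca else ?Ca)" by (rule split_C)
    have E1: "?Eb = (if ?t \<in> ?E then insert ?t ?Ea else ?Ea)" by (rule split_E)
    have cC1: "card ?Cb = (if ?t \<in> ?CT then Suc (card ?Ca) else card ?Ca)"
      using C1 finC by simp
    have cE1: "card ?Eb = (if ?t \<in> ?E then Suc (card ?Ea) else card ?Ea)"
      using E1 finE by simp
    have ctdef: "?t \<in> ?CT \<longleftrightarrow> \<not> rule_sat (Ls ?t) (xs ?t) \<and> resp ?t \<noteq> None"
      unfolding creation_times_def by simp
    show ?case
    proof (cases "?t \<in> ?E")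
      case False
      hence ne: "resp ?t = (if yhat ?t = cstar lab gx (xs ?t) then None
           else Some (cstar lab gx (xs ?t), phi (gx (xs ?t)) (gx (ex ?t))))"
        unfolding exceptions_def by auto
      note s3 = S3[OF rep x st ne]
      show ?thesis
      proof (cases "?t \<in> ?CT")
        case True
        have "?c (Ls ?t) \<subset> ?c (Ls (Suc ?t))" using s3 True ctdef by blast
        hence "card (?c (Ls ?t)) < card (?c (Ls (Suc ?t)))" by (rule psubset_card_mono[OF comps_fin])
        moreover have "card ?Cb = Suc (card ?Ca)" using cC1 True by (simp only: if_True)
        moreover have "card ?Eb = card ?Ea" using cE1 False by (simp only: if_False)
        ultimately show ?thesis using Suc.IH by linarith
      next
        case False2: False
        have "card (?c (Ls ?t)) \<le> card (?c (Ls (Suc ?t)))" using s3 by (intro card_mono[OF comps_fin]) blast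
        moreover have "card ?Cb = card ?Ca" using cC1 False2 by (simp only: if_False)
        moreover have "card ?Eb = card ?Ea" using cE1 False by (simp only: if_False)
        ultimately show ?thesis using Suc.IH by linarith
      qed
    next
      case True
      show ?thesis
      proof (cases "?t \<in> ?CT")
        case True2: True
        have "?c (Ls ?t) \<subseteq> ?c (Ls (Suc ?t))" using S2[OF rep x st] True2 ctdef by blast
        hence "card (?c (Ls ?t)) \<le> card (?c (Ls (Suc ?t)))" by (intro card_mono[OF comps_fin])
        moreover have "card ?Cb = Suc (card ?Ca)" using cC1 True2 by (simp only: if_True)
        moreover have "card ?Eb = Suc (card ?Ea)" using cE1 True by (simp only: if_True)
        ultimately show ?thesis using Suc.IH by linarith
      next
        case False2: False
        have "?c (Ls ?t) \<subseteq> insert (gx (ex ?t)) (?c (Ls (Suc ?t)))" using S1[OF rep x st] .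
        hence "card (?c (Ls ?t)) \<le> card (insert (gx (ex ?t)) (?c (Ls (Suc ?t))))"
          by (intro card_mono) (simp add: comps_fin)
        also have "\<dots> \<le> Suc (card (?c (Ls (Suc ?t))))" by (simp add: comps_fin card_insert_if)
        finally have "card (?c (Ls ?t)) \<le> Suc (card (?c (Ls (Suc ?t))))" .
        moreover have "card ?Cb = card ?Ca" using cC1 False2 by (simp only: if_False)
        moreover have "card ?Eb = Suc (card ?Ea)" using cE1 True by (simp only: if_True)
        ultimately show ?thesis using Suc.IH by linarith
      qed
    qed
  qed
  have bnd: "card {s\<in>?CT. s < n} \<le> m + k" for n
  proof -
    have "card {s\<in>?CT. s < n} \<le> card {s\<in>?CT. s < Suc n}" by (rule card_mono) auto
    also have "\<dots> \<le> card (?c (Ls (Suc n))) + card {s\<in>?E. 1 \<le> s \<and> s < Suc n}" by (rule inv)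
    also have "\<dots> \<le> m + k"
    proof -
      have "card {s\<in>?E. 1 \<le> s \<and> s < Suc n} \<le> card ?E" by (rule card_mono) (use assms(4) in auto)
      thus ?thesis using comps_card[of m lab gx phi "Ls (Suc n)"] assms(5) by linarith
    qed
    finally show ?thesis .
  qed
  show ?thesis by (rule fin_from_prefix) (rule bnd)
qed

end
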